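(* Let $H$ be a homogeneous elliptic operator of order $2m$ with real constant coefficients on $\mathbb{R}^n$ and let $\Omega\subseteq\mathbb{R}^n$ be an open convex set with nonempty boundary. Then for every $x\in\Omega$, $$\int_{S^{n-1}}\frac{d\sigma(\omega)}{\big(F_H^*(\omega)\,d_\omega(x)\big)^{2m}}\ \ge\ \frac{\mu_H}{d_H^{2m}(x)}.$$
   Context: $H$ has symbol $H(\xi)=\sum_{|\alpha|=2m}a_\alpha\xi^\alpha$, real $a_\alpha$, $H(\xi)>0$ for $\xi\ne0$. $F_H(\xi)=H(\xi)^{1/(2m)}$, $F_H^*(\omega)=\sup_{\xi\neq0}\frac{\omega\cdot\xi}{F_H(\xi)}$, $F_H^{**}(\xi)=\sup_{\omega\neq0}\frac{\xi\cdot\omega}{F_H^*(\omega)}$. $d_\omega(x)=\inf\{|s|:x+s\omega\notin\Omega\}$ and $d_H(x)=\min\{F_H^*(x-y):y\in\partial\Omega\}$. $d\sigma$ is the normalized surface measure on $S^{n-1}$, and $\mu_H$ is the largest constant such that $\mu_H F_H^{**}(\xi)^{2m}\le\int_{S^{n-1}}\frac{(\xi\cdot\omega)^{2m}}{F_H^*(\omega)^{2m}}d\sigma(\omega)$ for all $\xi\in\mathbb{R}^n$. *)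

theory Defs
  imports "HOL-Analysis.Analysis"
begin

definition multi_indices :: "nat \<Rightarrow> ('n::finite \<Rightarrow> nat) set" where
  "multi_indices k = {\<alpha>. (\<Sum>i\<in>UNIV. \<alpha> i) = k}"

definition symbol :: "nat \<Rightarrow> (('n::finite \<Rightarrow> nat) \<Rightarrow> real) \<Rightarrow> real^'n \<Rightarrow> real" where
  "symbol m a \<xi> = (\<Sum>\<alpha>\<in>multi_indices (2*m). a \<alpha> * (\<Prod>i\<in>UNIV. (\<xi>$i) ^ (\<alpha> i)))"

definition elliptic_symbol :: "nat \<Rightarrow> (('n::finite \<Rightarrow> nat) \<Rightarrow> real) \<Rightarrow> bool" where
  "elliptic_symbol m a \<longleftrightarrow> (\<forall>\<xi>::real^'n. \<xi> \<noteq> 0 \<longrightarrow> symbol m a \<xi> > 0)"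

definition F_H :: "nat \<Rightarrow> (('n::finite \<Rightarrow> nat) \<Rightarrow> real) \<Rightarrow> real^'n \<Rightarrow> real" where
  "F_H m a \<xi> = symbol m a \<xi> powr (1 / real (2*m))"

definition F_H_star :: "nat \<Rightarrow> (('n::finite \<Rightarrow> nat) \<Rightarrow> real) \<Rightarrow> real^'n \<Rightarrow> real" where
  "F_H_star m a \<omega> = (SUP \<xi>\<in>{\<xi>. \<xi> \<noteq> 0}. (\<omega> \<bullet> \<xi>) / F_H m a \<xi>)"

definition F_H_star_star :: "nat \<Rightarrow> (('n::finite \<Rightarrow> nat) \<Rightarrow> real) \<Rightarrow> real^'n \<Rightarrow> real" where
  "F_H_star_star m a \<xi> = (SUP \<omega>\<in>{\<omega>. \<omega> \<noteq> 0}. (\<xi> \<bullet> \<omega>) / F_H_star m a \<omega>)"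

text \<open>Normalized surface measure on S^{n-1}, realised as the (normalized) cone measure:
  the average of f over the sphere equals (1/|B|) times the integral over the unit ball B
  of f(x/|x|).\<close>
definition sphere_avg :: "(real^'n::finite \<Rightarrow> real) \<Rightarrow> real" where
  "sphere_avg f = (LINT x:ball 0 1|lborel. f (x /\<^sub>R norm x)) / measure lborel (ball (0::real^'n) 1)"

definition sphere_avg_nn :: "(real^'n::finite \<Rightarrow> ennreal) \<Rightarrow> ennreal" where
  "sphere_avg_nn f = (\<integral>\<^sup>+ x\<in>ball 0 1. f (x /\<^sub>R norm x) \<partial>lborel) / emeasure lborel (ball (0::real^'n) 1)"

definition mu_H :: "nat \<Rightarrow> (('n::finite \<Rightarrow> nat) \<Rightarrow> real) \<Rightarrow> real" where
  "mu_H m a = Sup {\<mu>. \<forall>\<xi>::real^'n. \<mu> * F_H_star_star m a \<xi> ^ (2*m)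
      \<le> sphere_avg (\<lambda>\<omega>. (\<xi> \<bullet> \<omega>) ^ (2*m) / F_H_star m a \<omega> ^ (2*m))}"

definition d_dir_set :: "(real^'n::finite) set \<Rightarrow> real^'n \<Rightarrow> real^'n \<Rightarrow> real set" where
  "d_dir_set \<Omega> \<omega> x = {\<bar>s\<bar> | s. x + s *\<^sub>R \<omega> \<notin> \<Omega>}"

definition d_dir :: "(real^'n::finite) set \<Rightarrow> real^'n \<Rightarrow> real^'n \<Rightarrow> real" where
  "d_dir \<Omega> \<omega> x = Inf (d_dir_set \<Omega> \<omega> x)"

definition d_H :: "nat \<Rightarrow> (('n::finite \<Rightarrow> nat) \<Rightarrow> real) \<Rightarrow> (real^'n) set \<Rightarrow> real^'n \<Rightarrow> real" where
  "d_H m a \<Omega> x = (INF y\<in>frontier \<Omega>. F_H_star m a (x - y))"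

text \<open>Integrand 1/(F*(omega) d_omega(x))^{2m}, with value 0 when d_omega(x) = +infinity.\<close>
definition lhs_integrand :: "nat \<Rightarrow> (('n::finite \<Rightarrow> nat) \<Rightarrow> real) \<Rightarrow> (real^'n) set \<Rightarrow> real^'n \<Rightarrow> real^'n \<Rightarrow> ennreal" where
  "lhs_integrand m a \<Omega> x \<omega> =
     (if d_dir_set \<Omega> \<omega> x = {} then 0
      else ennreal (1 / (F_H_star m a \<omega> * d_dir \<Omega> \<omega> x) ^ (2*m)))"

end

theory Submission
  imports Defs
begin



lemma symbol_hom: "symbol m a (t *\<^sub>R \<xi>) = t ^ (2*m) * symbol m a \<xi>"
proof -
  have "\<And>\<alpha>. \<alpha> \<in> multi_indices (2*m) \<Longrightarrow> (\<Prod>i\<in>UNIV. ((t *\<^sub>R \<xi>)$i) ^ (\<alpha> i)) = t^(2*m) * (\<Prod>i\<in>UNIV. (\<xi>$i) ^ (\<alpha> i))"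
  proof -
    fix \<alpha> :: "'a \<Rightarrow> nat" assume "\<alpha> \<in> multi_indices (2*m)"
    then have s: "(\<Sum>i\<in>UNIV. \<alpha> i) = 2*m" by (simp add: multi_indices_def)
    have "(\<Prod>i\<in>UNIV. ((t *\<^sub>R \<xi>)$i) ^ (\<alpha> i)) = (\<Prod>i\<in>UNIV. t ^ \<alpha> i * (\<xi>$i) ^ (\<alpha> i))"
      by (simp add: power_mult_distrib)
    also have "\<dots> = (\<Prod>i\<in>UNIV. t ^ \<alpha> i) * (\<Prod>i\<in>UNIV. (\<xi>$i) ^ (\<alpha> i))" by (rule prod.distrib)
    also have "(\<Prod>i\<in>UNIV. t ^ \<alpha> i) = t ^ (2*m)" using s by (metis power_sum)
    finally show "?thesis \<alpha>" .
  qed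
  then show ?thesis unfolding symbol_def by (simp add: sum_distrib_left mult.left_commute)
qed

lemma symbol_cont: "continuous_on UNIV (symbol m a)"
  unfolding symbol_def by (intro continuous_intros)




lemma symbol_zero: "m \<ge> 1 \<Longrightarrow> symbol m a 0 = 0"
  using symbol_hom[of m a 0 0] by (simp add: power_0_left)

lemma symbol_nonneg: "elliptic_symbol m a \<Longrightarrow> m \<ge> 1 \<Longrightarrow> symbol m a \<xi> \<ge> 0"
  by (cases "\<xi> = 0") (auto simp: elliptic_symbol_def symbol_zero less_imp_le)

lemma F_H_scale:
  assumes "elliptic_symbol m a" "m \<ge> 1"
  shows "F_H m a (t *\<^sub>R \<xi>) = \<bar>t\<bar> * F_H m a \<xi>"
proof (cases "t = 0")
  case True then show ?thesis using assms by (simp add: F_H_def symbol_zero)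
next
  case False
  have s: "symbol m a \<xi> \<ge> 0" by (rule symbol_nonneg[OF assms])
  have "t ^ (2*m) = \<bar>t\<bar> ^ (2*m)" by (simp add: power_mult power2_abs)
  also have "\<dots> = \<bar>t\<bar> powr (real (2*m))" using False by (simp add: powr_realpow[symmetric])
  finally have e: "t ^ (2*m) = \<bar>t\<bar> powr (real (2*m))" .
  have "F_H m a (t *\<^sub>R \<xi>) = (\<bar>t\<bar> powr (real (2*m)) * symbol m a \<xi>) powr (1 / real (2*m))"
    unfolding F_H_def symbol_hom e ..
  also have "\<dots> = (\<bar>t\<bar> powr (real (2*m))) powr (1 / real (2*m)) * symbol m a \<xi> powr (1 / real (2*m))"
    using s by (simp add: powr_mult)
  also have "(\<bar>t\<bar> powr (real (2*m))) powr (1 / real (2*m)) = \<bar>t\<bar>"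
    using assms(2) False by (simp add: powr_powr)
  finally show ?thesis by (simp add: F_H_def)
qed

lemma F_H_even:
  assumes "elliptic_symbol m a" "m \<ge> 1"
  shows "F_H m a (- \<xi>) = F_H m a \<xi>"
  using F_H_scale[OF assms, of "-1" \<xi>] by simp

lemma F_H_bounds:
  assumes "elliptic_symbol m a" "m \<ge> 1"
  shows "\<exists>c C. 0 < c \<and> (\<forall>\<xi>::real^'n. c * norm \<xi> \<le> F_H m a \<xi> \<and> F_H m a \<xi> \<le> C * norm \<xi>)"
proof -
  let ?S = "sphere (0::real^'n) 1"
  have ne: "?S \<noteq> {}" by simp
  have cs: "compact ?S" by simp
  have ct: "continuous_on ?S (symbol m a)" using symbol_cont continuous_on_subset by blast
  obtain u0 where u0: "u0 \<in> ?S" "\<And>y. y \<in> ?S \<Longrightarrow> symbol m a u0 \<le> symbol m a y"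
    using continuous_attains_inf[OF cs ne ct] by blast
  obtain u1 where u1: "u1 \<in> ?S" "\<And>y. y \<in> ?S \<Longrightarrow> symbol m a y \<le> symbol m a u1"
    using continuous_attains_sup[OF cs ne ct] by blast
  have lo: "symbol m a u0 > 0" using u0(1) assms(1) unfolding elliptic_symbol_def by (metis norm_zero mem_sphere_0 zero_neq_one)
  define c where "c = symbol m a u0 powr (1 / real (2*m))"
  define C where "C = symbol m a u1 powr (1 / real (2*m))"
  have cpos: "c > 0" using lo by (simp add: c_def)
  have "c * norm \<xi> \<le> F_H m a \<xi> \<and> F_H m a \<xi> \<le> C * norm \<xi>" for \<xi> :: "real^'n"
  proof (cases "\<xi> = 0")
    case True then show ?thesis using assms by (simp add: F_H_def symbol_zero)
  next
    case False
    define u where "u = \<xi> /\<^sub>R norm \<xi>"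
    have uS: "u \<in> ?S" using False by (simp add: u_def)
    have xi: "\<xi> = norm \<xi> *\<^sub>R u" using False by (simp add: u_def)
    have F: "F_H m a \<xi> = norm \<xi> * F_H m a u"
      by (subst xi, subst F_H_scale[OF assms]) simp
    have "c \<le> F_H m a u" unfolding c_def F_H_def
      using u0(2)[OF uS] lo by (intro powr_mono2) auto
    moreover have "F_H m a u \<le> C" unfolding C_def F_H_def
      using u1(2)[OF uS] symbol_nonneg[OF assms] by (intro powr_mono2) auto
    ultimately show ?thesis unfolding F
      by (metis mult.commute mult_right_mono norm_ge_zero)
  qed
  with cpos show ?thesis by blast
qed




context
  fixes m :: nat and a :: "('n::finite \<Rightarrow> nat) \<Rightarrow> real"
  assumes ell: "elliptic_symbol m a" and m1: "m \<ge> 1"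
begin

lemma F_H_pos: "\<xi> \<noteq> 0 \<Longrightarrow> F_H m a (\<xi>::real^'n) > 0"
  using ell[unfolded elliptic_symbol_def, rule_format, of \<xi>] by (simp add: F_H_def)

lemma Fs_bdd: "bdd_above ((\<lambda>\<xi>. (\<omega> \<bullet> \<xi>) / F_H m a \<xi>) ` {\<xi>::real^'n. \<xi> \<noteq> 0})"
proof -
  obtain c C where cC: "0 < c" "\<And>\<xi>::real^'n. c * norm \<xi> \<le> F_H m a \<xi> \<and> F_H m a \<xi> \<le> C * norm \<xi>"
    using F_H_bounds[OF ell m1] by blast
  have "(\<omega> \<bullet> \<xi>) / F_H m a \<xi> \<le> norm \<omega> / c" if "\<xi> \<noteq> 0" for \<xi>
  proof -
    have Fp: "F_H m a \<xi> > 0" using F_H_pos that by blast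
    have "(\<omega> \<bullet> \<xi>) / F_H m a \<xi> \<le> (norm \<omega> * norm \<xi>) / F_H m a \<xi>"
      using Fp by (intro divide_right_mono) (auto simp: norm_cauchy_schwarz)
    also have "\<dots> \<le> (norm \<omega> * norm \<xi>) / (c * norm \<xi>)"
    proof (rule divide_left_mono)
      show "c * norm \<xi> \<le> F_H m a \<xi>" using cC(2) by blast
      show "0 \<le> norm \<omega> * norm \<xi>" by simp
      show "0 < F_H m a \<xi> * (c * norm \<xi>)" using cC(1) that Fp by simp
    qed
    also have "\<dots> = norm \<omega> / c" using that by simp
    finally show ?thesis .
  qed
  then show ?thesis by (intro bdd_aboveI2) auto
qed

lemma Fs_ge: "\<xi> \<noteq> 0 \<Longrightarrow> (\<omega> \<bullet> \<xi>) / F_H m a \<xi> \<le> F_H_star m a (\<omega>::real^'n)"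
  unfolding F_H_star_def by (rule cSUP_upper[OF _ Fs_bdd]) auto

lemma Fs_lower: "\<exists>C>0. \<forall>\<omega>::real^'n. norm \<omega> / C \<le> F_H_star m a \<omega>"
proof -
  obtain c C where cC: "0 < c" "\<And>\<xi>::real^'n. c * norm \<xi> \<le> F_H m a \<xi> \<and> F_H m a \<xi> \<le> C * norm \<xi>"
    using F_H_bounds[OF ell m1] by blast
  obtain v :: "real^'n" where "norm v = 1" using vector_choose_size[of 1] by auto
  then have v: "v \<noteq> 0" by auto
  have "0 < c * norm v" using cC(1) v by simp
  then have "0 < C * norm v" using cC(2)[of v] by linarith
  then have Cpos: "C > 0" by (simp add: zero_less_mult_iff)
  have "norm \<omega> / C \<le> F_H_star m a \<omega>" for \<omega> :: "real^'n"
  proof (cases "\<omega> = 0")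
    case True
    have "(0 \<bullet> v) / F_H m a v \<le> F_H_star m a 0" by (rule Fs_ge[OF v])
    then show ?thesis using True by simp
  next
    case False
    have Fp: "F_H m a \<omega> > 0" using F_H_pos False by blast
    have "norm \<omega> / C = (norm \<omega> * norm \<omega>) / (C * norm \<omega>)" using False by (simp add: field_simps)
    also have "\<dots> \<le> (norm \<omega> * norm \<omega>) / F_H m a \<omega>"
    proof (rule divide_left_mono)
      show "F_H m a \<omega> \<le> C * norm \<omega>" using cC(2)[of \<omega>] by blast
      show "0 \<le> norm \<omega> * norm \<omega>" by simp
      show "0 < C * norm \<omega> * F_H m a \<omega>" using Cpos False Fp by simp
    qed
    also have "\<dots> = (\<omega> \<bullet> \<omega>) / F_H m a \<omega>" by (simp add: dot_square_norm power2_eq_square)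
    also have "\<dots> \<le> F_H_star m a \<omega>" by (rule Fs_ge[OF False])
    finally show ?thesis .
  qed
  with Cpos show ?thesis by blast
qed

lemma Fs_pos: "\<omega> \<noteq> 0 \<Longrightarrow> F_H_star m a (\<omega>::real^'n) > 0"
proof -
  assume w: "\<omega> \<noteq> 0"
  obtain C where C: "C > 0" "\<And>\<omega>::real^'n. norm \<omega> / C \<le> F_H_star m a \<omega>" using Fs_lower by blast
  have "0 < norm \<omega> / C" using w C(1) by simp
  then show ?thesis using C(2)[of \<omega>] by linarith
qed

lemma Fs_even: "F_H_star m a (- \<omega>) = F_H_star m a (\<omega>::real^'n)"
proof -
  have "(\<lambda>\<xi>. ((- \<omega>) \<bullet> \<xi>) / F_H m a \<xi>) ` {\<xi>::real^'n. \<xi> \<noteq> 0}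
      = (\<lambda>\<xi>. (\<omega> \<bullet> \<xi>) / F_H m a \<xi>) ` {\<xi>::real^'n. \<xi> \<noteq> 0}"
  proof (intro set_eqI iffI)
    fix z assume "z \<in> (\<lambda>\<xi>. ((- \<omega>) \<bullet> \<xi>) / F_H m a \<xi>) ` {\<xi>. \<xi> \<noteq> 0}"
    then obtain \<xi> where "\<xi> \<noteq> 0" "z = ((- \<omega>) \<bullet> \<xi>) / F_H m a \<xi>" by auto
    then show "z \<in> (\<lambda>\<xi>. (\<omega> \<bullet> \<xi>) / F_H m a \<xi>) ` {\<xi>. \<xi> \<noteq> 0}"
      by (intro image_eqI[of _ _ "- \<xi>"]) (auto simp: F_H_even[OF ell m1])
  next
    fix z assume "z \<in> (\<lambda>\<xi>. (\<omega> \<bullet> \<xi>) / F_H m a \<xi>) ` {\<xi>. \<xi> \<noteq> 0}"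
    then obtain \<xi> where "\<xi> \<noteq> 0" "z = (\<omega> \<bullet> \<xi>) / F_H m a \<xi>" by auto
    then show "z \<in> (\<lambda>\<xi>. ((- \<omega>) \<bullet> \<xi>) / F_H m a \<xi>) ` {\<xi>. \<xi> \<noteq> 0}"
      by (intro image_eqI[of _ _ "- \<xi>"]) (auto simp: F_H_even[OF ell m1])
  qed
  then show ?thesis unfolding F_H_star_def by (rule arg_cong[where f=Sup])
qed

lemma Fss_bdd: "bdd_above ((\<lambda>\<omega>. (\<nu> \<bullet> \<omega>) / F_H_star m a \<omega>) ` {\<omega>::real^'n. \<omega> \<noteq> 0})"
proof -
  obtain C where C: "C > 0" "\<And>\<omega>::real^'n. norm \<omega> / C \<le> F_H_star m a \<omega>" using Fs_lower by blast
  have "(\<nu> \<bullet> \<omega>) / F_H_star m a \<omega> \<le> C * norm \<nu>" if "\<omega> \<noteq> 0" for \<omega>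
  proof -
    have Fp: "F_H_star m a \<omega> > 0" using Fs_pos that by blast
    have "(\<nu> \<bullet> \<omega>) / F_H_star m a \<omega> \<le> (norm \<nu> * norm \<omega>) / F_H_star m a \<omega>"
      using Fp by (intro divide_right_mono) (auto simp: norm_cauchy_schwarz)
    also have "\<dots> \<le> (norm \<nu> * norm \<omega>) / (norm \<omega> / C)"
    proof (rule divide_left_mono)
      show "norm \<omega> / C \<le> F_H_star m a \<omega>" using C(2) by blast
      show "0 \<le> norm \<nu> * norm \<omega>" by simp
      show "0 < F_H_star m a \<omega> * (norm \<omega> / C)" using C(1) that Fp by simp
    qed
    also have "\<dots> = C * norm \<nu>" using that C by simp
    finally show ?thesis .
  qed
  then show ?thesis by (intro bdd_aboveI2) auto
qed

lemma holder: "w \<noteq> 0 \<Longrightarrow> \<nu> \<bullet> w \<le> F_H_star_star m a \<nu> * F_H_star m a (w::real^'n)"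
proof -
  assume w: "w \<noteq> 0"
  have "(\<nu> \<bullet> w) / F_H_star m a w \<le> F_H_star_star m a \<nu>"
    unfolding F_H_star_star_def by (rule cSUP_upper[OF _ Fss_bdd]) (use w in auto)
  then show ?thesis using Fs_pos[OF w] by (simp add: divide_le_eq)
qed

end



lemma even_pow_nonneg: "0 \<le> (x::real) ^ (2*m)"
  by (metis power_mult zero_le_power2 zero_le_power)

lemma sphere_avg_nonneg:
  assumes "\<And>\<omega>. 0 \<le> g \<omega>"
  shows "0 \<le> sphere_avg (g :: real^'n::finite \<Rightarrow> real)"
  unfolding sphere_avg_def set_lebesgue_integral_def
  using assms by (intro divide_nonneg_nonneg integral_nonneg) (auto simp: indicator_def)

lemma nn_step:
  fixes g :: "real^'n::finite \<Rightarrow> real" and L :: "real^'n \<Rightarrow> ennreal"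
  assumes g: "\<And>\<omega>. 0 \<le> g \<omega>" and c: "0 \<le> c" and L: "\<And>\<omega>. ennreal (c * g \<omega>) \<le> L \<omega>"
  shows "ennreal (c * sphere_avg g) \<le> sphere_avg_nn L"
proof -
  let ?B = "ball (0::real^'n) 1"
  define M where "M = measure lborel ?B"
  have Mpos: "M > 0" unfolding M_def by (rule content_ball_pos) simp
  have eM: "emeasure lborel ?B = ennreal M"
    unfolding M_def using emeasure_lborel_ball_finite[of "0::real^'n" 1]
    by (intro emeasure_eq_ennreal_measure) auto
  define h where "h x = indicator ?B x *\<^sub>R g (x /\<^sub>R norm x)" for x
  define I where "I = integral\<^sup>L lborel h"
  have avg: "sphere_avg g = I / M"
    unfolding sphere_avg_def set_lebesgue_integral_def I_def h_def M_def ..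
  have hnn: "0 \<le> h x" for x unfolding h_def using g by (simp add: indicator_def)
  have "ennreal (c * I) \<le> (\<integral>\<^sup>+ x\<in>?B. L (x /\<^sub>R norm x) \<partial>lborel)"
  proof (cases "integrable lborel h")
    case True
    have "ennreal (c * I) = ennreal (integral\<^sup>L lborel (\<lambda>x. c * h x))"
      unfolding I_def by simp
    also have "\<dots> = (\<integral>\<^sup>+ x. ennreal (c * h x) \<partial>lborel)"
      using True hnn c by (intro nn_integral_eq_integral[symmetric]) auto
    also have "\<dots> \<le> (\<integral>\<^sup>+ x\<in>?B. L (x /\<^sub>R norm x) \<partial>lborel)"
    proof (intro nn_integral_mono)
      fix x :: "real^'n"
      show "ennreal (c * h x) \<le> L (x /\<^sub>R norm x) * indicator ?B x"
        using L[of "x /\<^sub>R norm x"] by (cases "x \<in> ?B") (auto simp: h_def)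
    qed
    finally show ?thesis .
  next
    case False
    then have "I = 0" unfolding I_def by (rule not_integrable_integral_eq)
    then show ?thesis by simp
  qed
  then have "ennreal (c * I) / ennreal M \<le> sphere_avg_nn L"
    unfolding sphere_avg_nn_def eM by (rule divide_right_mono_ennreal)
  moreover have "ennreal (c * I) / ennreal M = ennreal (c * sphere_avg g)"
    using Mpos c hnn unfolding avg I_def by (subst divide_ennreal) (auto simp: mult_nonneg_nonneg)
  ultimately show ?thesis by simp
qed




lemma mu_H_le:
  fixes \<nu> :: "real^'n::finite" and a :: "('n \<Rightarrow> nat) \<Rightarrow> real"
  assumes A: "F_H_star_star m a \<nu> ^ (2*m) > 0"
  shows "mu_H m a * F_H_star_star m a \<nu> ^ (2*m)
     \<le> sphere_avg (\<lambda>\<omega>. (\<nu> \<bullet> \<omega>) ^ (2*m) / F_H_star m a \<omega> ^ (2*m))"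
proof -
  let ?B = "\<lambda>\<xi>::real^'n. sphere_avg (\<lambda>\<omega>. (\<xi> \<bullet> \<omega>) ^ (2*m) / F_H_star m a \<omega> ^ (2*m))"
  let ?S = "{\<mu>. \<forall>\<xi>::real^'n. \<mu> * F_H_star_star m a \<xi> ^ (2*m) \<le> ?B \<xi>}"
  have "0 \<in> ?S"
    by (auto intro!: sphere_avg_nonneg divide_nonneg_nonneg even_pow_nonneg)
  then have ne: "?S \<noteq> {}" by blast
  have "Sup ?S \<le> ?B \<nu> / F_H_star_star m a \<nu> ^ (2*m)"
  proof (rule cSup_least[OF ne])
    fix \<mu> assume "\<mu> \<in> ?S"
    then have "\<mu> * F_H_star_star m a \<nu> ^ (2*m) \<le> ?B \<nu>" by blast
    then show "\<mu> \<le> ?B \<nu> / F_H_star_star m a \<nu> ^ (2*m)" using A by (simp add: pos_le_divide_eq)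
  qed
  then show ?thesis unfolding mu_H_def using A by (simp add: pos_le_divide_eq)
qed

lemma pointwise:
  fixes \<Omega> :: "(real^'n::finite) set"
  assumes m1: "m \<ge> 1" and ell: "elliptic_symbol m a" and op: "open \<Omega>" and x: "x \<in> \<Omega>"
    and sep: "\<forall>z\<in>\<Omega>. \<nu> \<bullet> z < \<nu> \<bullet> y" and D: "D = \<nu> \<bullet> (y - x)" "D > 0"
  shows "ennreal ((1 / D ^ (2*m)) * ((\<nu> \<bullet> \<omega>) ^ (2*m) / F_H_star m a \<omega> ^ (2*m)))
         \<le> lhs_integrand m a \<Omega> x \<omega>"
proof (cases "\<nu> \<bullet> \<omega> = 0")
  case True
  then show ?thesis using m1 by (simp add: power_0_left)
next
  case False
  then have w: "\<omega> \<noteq> 0" by auto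
  define s0 where "s0 = D / (\<nu> \<bullet> \<omega>)"
  have "\<nu> \<bullet> (x + s0 *\<^sub>R \<omega>) = \<nu> \<bullet> y"
    using False D(1) by (simp add: s0_def inner_add_right inner_diff_right)
  then have out: "x + s0 *\<^sub>R \<omega> \<notin> \<Omega>" using sep by auto
  then have s0in: "\<bar>s0\<bar> \<in> d_dir_set \<Omega> \<omega> x" unfolding d_dir_set_def by blast
  then have ne: "d_dir_set \<Omega> \<omega> x \<noteq> {}" by blast
  define dd where "dd = d_dir \<Omega> \<omega> x"
  have bdd: "bdd_below (d_dir_set \<Omega> \<omega> x)"
    unfolding d_dir_set_def by (rule bdd_belowI[of _ 0]) auto
  have ddle: "dd \<le> \<bar>s0\<bar>" unfolding dd_def d_dir_def by (rule cInf_lower[OF s0in bdd])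
  obtain r where r: "r > 0" "ball x r \<subseteq> \<Omega>" using op x open_contains_ball by blast
  have "r / norm \<omega> \<le> dd" unfolding dd_def d_dir_def
  proof (rule cInf_greatest[OF ne])
    fix t assume "t \<in> d_dir_set \<Omega> \<omega> x"
    then obtain s where s: "t = \<bar>s\<bar>" "x + s *\<^sub>R \<omega> \<notin> \<Omega>" unfolding d_dir_set_def by blast
    then have "x + s *\<^sub>R \<omega> \<notin> ball x r" using r by blast
    then have "r \<le> \<bar>s\<bar> * norm \<omega>" by (simp add: dist_norm)
    then show "r / norm \<omega> \<le> t" using w s(1) by (simp add: divide_le_eq)
  qed
  moreover have "0 < r / norm \<omega>" using r w by simp
  ultimately have ddpos: "dd > 0" by linarith
  have Fp: "F_H_star m a \<omega> > 0" using Fs_pos[OF ell m1 w] .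
  have key: "\<bar>\<nu> \<bullet> \<omega>\<bar> * dd \<le> D"
  proof -
    have "\<bar>\<nu> \<bullet> \<omega>\<bar> * dd \<le> \<bar>\<nu> \<bullet> \<omega>\<bar> * \<bar>s0\<bar>" using ddle by (simp add: mult_left_mono)
    also have "\<dots> = D" using False D(2) by (simp add: s0_def abs_mult[symmetric])
    finally show ?thesis .
  qed
  have le1: "\<bar>\<nu> \<bullet> \<omega>\<bar> / (D * F_H_star m a \<omega>) \<le> 1 / (F_H_star m a \<omega> * dd)"
  proof -
    have "\<bar>\<nu> \<bullet> \<omega>\<bar> / (D * F_H_star m a \<omega>) = (\<bar>\<nu> \<bullet> \<omega>\<bar> * dd) / (D * (F_H_star m a \<omega> * dd))"
      using ddpos by simp
    also have "\<dots> \<le> D / (D * (F_H_star m a \<omega> * dd))"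
      using key D(2) Fp ddpos by (intro divide_right_mono) auto
    also have "\<dots> = 1 / (F_H_star m a \<omega> * dd)" using D(2) by simp
    finally show ?thesis .
  qed
  have "(1 / D ^ (2*m)) * ((\<nu> \<bullet> \<omega>) ^ (2*m) / F_H_star m a \<omega> ^ (2*m))
      = (\<bar>\<nu> \<bullet> \<omega>\<bar> / (D * F_H_star m a \<omega>)) ^ (2*m)"
    by (simp add: power_divide power_mult_distrib power_even_abs)
  also have "\<dots> \<le> (1 / (F_H_star m a \<omega> * dd)) ^ (2*m)"
    using le1 D(2) Fp by (intro power_mono) auto
  finally have "(1 / D ^ (2*m)) * ((\<nu> \<bullet> \<omega>) ^ (2*m) / F_H_star m a \<omega> ^ (2*m))
      \<le> 1 / (F_H_star m a \<omega> * dd) ^ (2*m)" by (simp add: power_divide)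
  then show ?thesis unfolding lhs_integrand_def using ne by (simp add: dd_def)
qed




lemma key_y:
  fixes \<Omega> :: "(real^'n::finite) set"
  assumes m1: "m \<ge> 1" and ell: "elliptic_symbol m a" and op: "open \<Omega>" and cv: "convex \<Omega>"
    and x: "x \<in> \<Omega>" and y: "y \<in> frontier \<Omega>" and mu: "mu_H m a > 0"
  shows "ennreal (mu_H m a / F_H_star m a (x - y) ^ (2*m)) \<le> sphere_avg_nn (lhs_integrand m a \<Omega> x)"
proof -
  have yn: "y \<notin> \<Omega>" using y op by (simp add: frontier_def interior_open)
  obtain \<nu> b where nb: "\<nu> \<noteq> 0" "\<forall>z\<in>\<Omega>. \<nu> \<bullet> z \<le> b" "\<forall>z\<in>{y}. \<nu> \<bullet> z \<ge> b"
    using separating_hyperplane_sets[OF cv convex_singleton, of y] x yn by blast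
  have sep: "\<forall>z\<in>\<Omega>. \<nu> \<bullet> z < \<nu> \<bullet> y"
  proof
    fix z assume z: "z \<in> \<Omega>"
    obtain e where e: "e > 0" "ball z e \<subseteq> \<Omega>" using op z open_contains_ball by blast
    define z' where "z' = z + (e / 2 / norm \<nu>) *\<^sub>R \<nu>"
    have "dist z z' = e / 2" using nb(1) e(1) by (simp add: z'_def dist_norm)
    then have "z' \<in> \<Omega>" using e by auto
    then have "\<nu> \<bullet> z' \<le> b" using nb(2) by blast
    moreover have "\<nu> \<bullet> z' = \<nu> \<bullet> z + e / 2 * norm \<nu>"
      using nb(1) by (simp add: z'_def inner_add_right dot_square_norm power2_eq_square)
    moreover have "e / 2 * norm \<nu> > 0" using e nb(1) by simp
    ultimately show "\<nu> \<bullet> z < \<nu> \<bullet> y" using nb(3) by auto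
  qed
  define D where "D = \<nu> \<bullet> (y - x)"
  have Dpos: "D > 0" using sep x unfolding D_def by (auto simp: inner_diff_right)
  let ?g = "\<lambda>\<omega>. (\<nu> \<bullet> \<omega>) ^ (2*m) / F_H_star m a \<omega> ^ (2*m)"
  have step: "ennreal ((1 / D ^ (2*m)) * sphere_avg ?g) \<le> sphere_avg_nn (lhs_integrand m a \<Omega> x)"
  proof (rule nn_step)
    show "\<And>\<omega>. 0 \<le> ?g \<omega>" by (intro divide_nonneg_nonneg even_pow_nonneg)
    show "0 \<le> 1 / D ^ (2*m)" using Dpos by simp
    show "\<And>\<omega>. ennreal (1 / D ^ (2*m) * ?g \<omega>) \<le> lhs_integrand m a \<Omega> x \<omega>"
      by (rule pointwise[OF m1 ell op x sep D_def Dpos])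
  qed
  have xy: "y - x \<noteq> 0" using x yn by auto
  have hol: "D \<le> F_H_star_star m a \<nu> * F_H_star m a (y - x)" unfolding D_def by (rule holder[OF ell m1 xy])
  have ev: "F_H_star m a (y - x) = F_H_star m a (x - y)"
    using Fs_even[OF ell m1, of "x - y"] by simp
  have Fsp: "F_H_star m a (x - y) > 0" using Fs_pos[OF ell m1] xy by (metis ev)
  have Fssp: "F_H_star_star m a \<nu> > 0"
  proof -
    have "0 < F_H_star_star m a \<nu> * F_H_star m a (x - y)" using hol Dpos unfolding ev by linarith
    then show ?thesis using Fsp by (simp add: zero_less_mult_iff)
  qed
  have A: "F_H_star_star m a \<nu> ^ (2*m) > 0" using Fssp by simp
  have mule: "mu_H m a * F_H_star_star m a \<nu> ^ (2*m) \<le> sphere_avg ?g" by (rule mu_H_le[OF A])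
  have pw: "D ^ (2*m) \<le> (F_H_star_star m a \<nu> * F_H_star m a (x - y)) ^ (2*m)"
    using hol ev Dpos by (intro power_mono) auto
  have "mu_H m a / F_H_star m a (x - y) ^ (2*m)
      = mu_H m a * F_H_star_star m a \<nu> ^ (2*m) / (F_H_star_star m a \<nu> * F_H_star m a (x - y)) ^ (2*m)"
    using Fssp by (simp add: power_mult_distrib)
  also have "\<dots> \<le> mu_H m a * F_H_star_star m a \<nu> ^ (2*m) / D ^ (2*m)"
    using pw Dpos mu A Fssp Fsp by (intro divide_left_mono) (auto intro!: mult_pos_pos)
  also have "\<dots> \<le> (1 / D ^ (2*m)) * sphere_avg ?g"
    using mule Dpos by (simp add: divide_right_mono)
  finally have "mu_H m a / F_H_star m a (x - y) ^ (2*m) \<le> (1 / D ^ (2*m)) * sphere_avg ?g" .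
  then have "ennreal (mu_H m a / F_H_star m a (x - y) ^ (2*m)) \<le> ennreal ((1 / D ^ (2*m)) * sphere_avg ?g)"
    by (rule ennreal_leI)
  then show ?thesis using step by (rule order_trans)
qed

theorem mainTheorem5:
  fixes m :: nat and a :: "('n::finite \<Rightarrow> nat) \<Rightarrow> real"
    and \<Omega> :: "(real^'n) set" and x :: "real^'n"
  assumes "m \<ge> 1"
    and "elliptic_symbol m a"
    and "open \<Omega>" and "convex \<Omega>" and "frontier \<Omega> \<noteq> {}"
    and "x \<in> \<Omega>"
  shows "sphere_avg_nn (lhs_integrand m a \<Omega> x)
           \<ge> ennreal (mu_H m a / d_H m a \<Omega> x ^ (2*m))"
proof (cases "mu_H m a > 0")
  case False
  then have "mu_H m a / d_H m a \<Omega> x ^ (2*m) \<le> 0"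
    by (intro divide_nonpos_nonneg even_pow_nonneg) simp
  then have "ennreal (mu_H m a / d_H m a \<Omega> x ^ (2*m)) = 0" by (rule ennreal_eq_0_iff[THEN iffD2])
  then show ?thesis by simp
next
  case True
  note m1 = assms(1) and ell = assms(2) and op = assms(3) and x = assms(6)
  let ?L = "sphere_avg_nn (lhs_integrand m a \<Omega> x)"
  let ?N = "2*m"
  have N: "?N > 0" using m1 by simp
  have K: "\<And>y. y \<in> frontier \<Omega> \<Longrightarrow> ennreal (mu_H m a / F_H_star m a (x - y) ^ ?N) \<le> ?L"
    using key_y[OF m1 ell op assms(4) x _ True] by blast
  show ?thesis
  proof (cases "?L = top")
    case True then show ?thesis by simp
  next
    case Lfin: False
    then obtain A where A: "?L = ennreal A" "A \<ge> 0" by (cases ?L rule: ennreal_cases) auto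
    obtain y0 where y0: "y0 \<in> frontier \<Omega>" using assms(5) by blast
    have tpos: "F_H_star m a (x - y) > 0" if "y \<in> frontier \<Omega>" for y
    proof -
      have "y \<notin> \<Omega>" using that op by (simp add: frontier_def interior_open)
      then have "x - y \<noteq> 0" using x by auto
      then show ?thesis using Fs_pos[OF ell m1] by blast
    qed
    have tle: "mu_H m a / F_H_star m a (x - y) ^ ?N \<le> A" if "y \<in> frontier \<Omega>" for y
      using K[OF that] A by (simp add: ennreal_le_iff)
    have "0 < mu_H m a / F_H_star m a (x - y0) ^ ?N" using True tpos[OF y0] by simp
    then have Apos: "A > 0" using tle[OF y0] by linarith
    define r where "r = root ?N (mu_H m a / A)"
    have rpos: "r > 0" unfolding r_def using True Apos N by simp
    have rN: "r ^ ?N = mu_H m a / A" unfolding r_def using True Apos N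
      by (intro real_root_pow_pos2) auto
    have rle: "r \<le> F_H_star m a (x - y)" if y: "y \<in> frontier \<Omega>" for y
    proof (rule ccontr)
      assume "\<not> r \<le> F_H_star m a (x - y)"
      then have "F_H_star m a (x - y) ^ ?N < r ^ ?N"
        using tpos[OF y] N by (intro power_strict_mono) auto
      then have "F_H_star m a (x - y) ^ ?N < mu_H m a / A" using rN by simp
      moreover have "mu_H m a / A \<le> F_H_star m a (x - y) ^ ?N"
        using tle[OF y] Apos tpos[OF y] True by (simp add: divide_le_eq mult.commute)
      ultimately show False by simp
    qed
    have rd: "r \<le> d_H m a \<Omega> x" unfolding d_H_def
      by (rule cINF_greatest[OF assms(5)]) (rule rle)
    have "mu_H m a / A \<le> d_H m a \<Omega> x ^ ?N"
      unfolding rN[symmetric] using rd rpos by (intro power_mono) auto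
    then have "mu_H m a / d_H m a \<Omega> x ^ ?N \<le> A"
      using Apos rpos rd True
      by (smt (verit, ccfv_SIG) divide_le_eq mult.commute zero_less_power)
    then show ?thesis unfolding A(1) by (rule ennreal_leI)
  qed
qed


end
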